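(* Let $\mathcal F$ be a proper family on an infinite set $Q$. Then: (a) $\mathcal F^{\#}$ is a filter contained in $\mathcal F\cap\mathcal F^*$, and it is full if $\mathcal F$ is full; (b) $\mathcal F^{\#}=(\mathcal F^* )^{\#}$; (c) if $\mathcal F$ is a filter then $\mathcal F^{\#}=\mathcal F$; in particular $(\mathcal F^{\#})^{\#}=\mathcal F^{\#}$; (d) if $\mathcal F$ is a filterdual then $\mathcal F^{\#}=\mathcal F^*$.
   Context: A family on $Q$ is a collection $\mathcal F$ of subsets of $Q$ closed under supersets ($A\in\mathcal F$, $A\subset B\subset Q$ implies $B\in\mathcal F$). It is proper if $\mathcal F\ne\emptyset$ and $\emptyset\notin\mathcal F$. The dual is $\mathcal F^*=\{B\subset Q: B\cap A\ne\emptyset\text{ for all }A\in\mathcal F\}$. A filter is a proper family closed under finite intersections; a filterdual is the dual of a filter, equivalently a proper family with $A_1\cup A_2\in\mathcal F\Rightarrow A_1\in\mathcal F$ or $A_2\in\mathcal F$. A family $\mathcal F$ is full if it is proper and $B\in\mathcal F$ implies $B\setminus F\in\mathcal F$ for every finite $F\subset Q$. The sharp dual is $\mathcal F^{\#}=\{A\subset Q: A\cap B\in\mathcal F\text{ for all }B\in\mathcal F\}$. *)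

theory Defs
  imports Main
begin

definition family_on :: "'a set \<Rightarrow> 'a set set \<Rightarrow> bool" where
  "family_on Q \<F> \<longleftrightarrow> \<F> \<subseteq> Pow Q \<and>
     (\<forall>A B. A \<in> \<F> \<and> A \<subseteq> B \<and> B \<subseteq> Q \<longrightarrow> B \<in> \<F>)"

definition proper_family :: "'a set \<Rightarrow> 'a set set \<Rightarrow> bool" where
  "proper_family Q \<F> \<longleftrightarrow> family_on Q \<F> \<and> \<F> \<noteq> {} \<and> {} \<notin> \<F>"

definition dual_fam :: "'a set \<Rightarrow> 'a set set \<Rightarrow> 'a set set" where
  "dual_fam Q \<F> = {B. B \<subseteq> Q \<and> (\<forall>A\<in>\<F>. B \<inter> A \<noteq> {})}"

definition sharp_dual :: "'a set \<Rightarrow> 'a set set \<Rightarrow> 'a set set" where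
  "sharp_dual Q \<F> = {A. A \<subseteq> Q \<and> (\<forall>B\<in>\<F>. A \<inter> B \<in> \<F>)}"

definition is_filter_on :: "'a set \<Rightarrow> 'a set set \<Rightarrow> bool" where
  "is_filter_on Q \<F> \<longleftrightarrow> proper_family Q \<F> \<and>
     (\<forall>A\<in>\<F>. \<forall>B\<in>\<F>. A \<inter> B \<in> \<F>)"

definition is_filterdual_on :: "'a set \<Rightarrow> 'a set set \<Rightarrow> bool" where
  "is_filterdual_on Q \<F> \<longleftrightarrow> (\<exists>\<G>. is_filter_on Q \<G> \<and> \<F> = dual_fam Q \<G>)"

definition full_family :: "'a set \<Rightarrow> 'a set set \<Rightarrow> bool" where
  "full_family Q \<F> \<longleftrightarrow> proper_family Q \<F> \<and>
     (\<forall>B\<in>\<F>. \<forall>F. finite F \<longrightarrow> B - F \<in> \<F>)"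

end

theory Submission
  imports Defs
begin

lemma compl_dual:
  assumes "family_on Q F" "X \<subseteq> Q" "X \<notin> F"
  shows "Q - X \<in> dual_fam Q F"
  unfolding dual_fam_def
proof (intro CollectI conjI ballI)
  show "Q - X \<subseteq> Q" by (rule Diff_subset)
  fix A assume A: "A \<in> F"
  show "(Q - X) \<inter> A \<noteq> {}"
  proof
    assume "(Q - X) \<inter> A = {}"
    moreover have "A \<subseteq> Q" using A assms(1) unfolding family_on_def by blast
    ultimately have "A \<subseteq> X" by blast
    then have "X \<in> F" using assms(1,2) A unfolding family_on_def by blast
    then show False using assms(3) by contradiction
  qed
qed

lemma sharp_sub: assumes "proper_family Q F" shows "sharp_dual Q F \<subseteq> F"
proof
  fix A assume A: "A \<in> sharp_dual Q F"
  have "Q \<in> F" using assms unfolding proper_family_def family_on_def by blast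
  then have "A \<inter> Q \<in> F" using A unfolding sharp_dual_def by blast
  moreover have "A \<inter> Q = A" using A unfolding sharp_dual_def by blast
  ultimately show "A \<in> F" by simp
qed

lemma fam_sub: "family_on Q F \<Longrightarrow> A \<in> F \<Longrightarrow> A \<subseteq> Q"
proof -
  assume f: "family_on Q F" and A: "A \<in> F"
  have "F \<subseteq> Pow Q" using f unfolding family_on_def by (rule conjunct1)
  then have "A \<in> Pow Q" using A by (rule subsetD)
  then show "A \<subseteq> Q" by (rule PowD)
qed

lemma fam_up: "family_on Q F \<Longrightarrow> A \<in> F \<Longrightarrow> A \<subseteq> B \<Longrightarrow> B \<subseteq> Q \<Longrightarrow> B \<in> F"
proof -
  assume f: "family_on Q F" and h: "A \<in> F" "A \<subseteq> B" "B \<subseteq> Q"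
  have "\<forall>A B. A \<in> F \<and> A \<subseteq> B \<and> B \<subseteq> Q \<longrightarrow> B \<in> F"
    using f unfolding family_on_def by (rule conjunct2)
  then have "A \<in> F \<and> A \<subseteq> B \<and> B \<subseteq> Q \<longrightarrow> B \<in> F" by (rule spec[of _ B, OF spec[of _ A]])
  then show "B \<in> F" using h by (rule mp[OF _ conjI[OF _ conjI]])
qed

lemma sharp_filter:
  assumes "proper_family Q F"
  shows "is_filter_on Q (sharp_dual Q F)"
proof -
  have fam: "family_on Q F" and ne: "F \<noteq> {}" and e: "{} \<notin> F"
    using assms by (auto simp: proper_family_def)
  obtain A0 where "A0 \<in> F" using ne by blast
  then have QF: "Q \<in> F" using fam_up[OF fam] fam_sub[OF fam] by blast
  have "Q \<in> sharp_dual Q F" unfolding sharp_dual_def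
  proof (intro CollectI conjI ballI)
    show "Q \<subseteq> Q" by simp
    fix B assume "B \<in> F"
    moreover then have "Q \<inter> B = B" using fam_sub[OF fam] by blast
    ultimately show "Q \<inter> B \<in> F" by simp
  qed
  moreover have "{} \<notin> sharp_dual Q F"
  proof
    assume "{} \<in> sharp_dual Q F"
    then have "{} \<inter> Q \<in> F" using QF unfolding sharp_dual_def by blast
    then show False using e by simp
  qed
  moreover have "family_on Q (sharp_dual Q F)"
    unfolding family_on_def
  proof (intro conjI allI impI)
    show "sharp_dual Q F \<subseteq> Pow Q" unfolding sharp_dual_def by auto
    fix A B assume h: "A \<in> sharp_dual Q F \<and> A \<subseteq> B \<and> B \<subseteq> Q"
    show "B \<in> sharp_dual Q F" unfolding sharp_dual_def
    proof (intro CollectI conjI ballI)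
      show "B \<subseteq> Q" using h by auto
      fix C assume C: "C \<in> F"
      then have 1: "A \<inter> C \<in> F" using h unfolding sharp_dual_def by blast
      have 2: "A \<inter> C \<subseteq> B \<inter> C" using h by blast
      have 3: "B \<inter> C \<subseteq> Q" using h by blast
      show "B \<inter> C \<in> F" by (rule fam_up[OF fam 1 2 3])
    qed
  qed
  moreover have "\<forall>A\<in>sharp_dual Q F. \<forall>B\<in>sharp_dual Q F. A \<inter> B \<in> sharp_dual Q F"
  proof (intro ballI)
    fix A B assume A: "A \<in> sharp_dual Q F" and B: "B \<in> sharp_dual Q F"
    show "A \<inter> B \<in> sharp_dual Q F" unfolding sharp_dual_def
    proof (intro CollectI conjI ballI)
      show "A \<inter> B \<subseteq> Q" using A unfolding sharp_dual_def by blast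
      fix C assume "C \<in> F"
      then have "B \<inter> C \<in> F" using B unfolding sharp_dual_def by blast
      then have "A \<inter> (B \<inter> C) \<in> F" using A unfolding sharp_dual_def by blast
      then show "A \<inter> B \<inter> C \<in> F" by (simp add: Int_assoc)
    qed
  qed
  ultimately show ?thesis unfolding is_filter_on_def proper_family_def by blast
qed

lemma sharp_dual_sub: assumes "proper_family Q F" shows "sharp_dual Q F \<subseteq> dual_fam Q F"
proof
  fix A assume A: "A \<in> sharp_dual Q F"
  have e: "{} \<notin> F" using assms proper_family_def by blast
  show "A \<in> dual_fam Q F" unfolding dual_fam_def
  proof (intro CollectI conjI ballI)
    show "A \<subseteq> Q" using A unfolding sharp_dual_def by blast
    fix B assume "B \<in> F"
    then have "A \<inter> B \<in> F" using A unfolding sharp_dual_def by blast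
    then show "A \<inter> B \<noteq> {}" using e by auto
  qed
qed

lemma sharp_full:
  fixes Q :: "'a set"
  assumes "full_family Q F" shows "full_family Q (sharp_dual Q F)"
proof -
  have p: "proper_family Q F" using assms by (simp add: full_family_def)
  have "\<forall>B\<in>sharp_dual Q F. \<forall>X::'a set. finite X \<longrightarrow> B - X \<in> sharp_dual Q F"
  proof (intro ballI allI impI)
    fix B and X :: "'a set" assume B: "B \<in> sharp_dual Q F" and X: "finite X"
    show "B - X \<in> sharp_dual Q F" unfolding sharp_dual_def
    proof (intro CollectI conjI ballI)
      show "B - X \<subseteq> Q" using B unfolding sharp_dual_def by auto
      fix C assume "C \<in> F"
      then have "B \<inter> C \<in> F" using B unfolding sharp_dual_def by auto
      then have "B \<inter> C - X \<in> F" using assms X unfolding full_family_def by blast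
      moreover have "B \<inter> C - X = (B - X) \<inter> C" by auto
      ultimately show "(B - X) \<inter> C \<in> F" by simp
    qed
  qed
  then show ?thesis using sharp_filter[OF p] unfolding full_family_def is_filter_on_def by blast
qed

lemma sharp_eq_dual:
  assumes "proper_family Q F"
  shows "sharp_dual Q F = sharp_dual Q (dual_fam Q F)"
proof
  have fam: "family_on Q F" using assms by (simp add: proper_family_def)
  show "sharp_dual Q F \<subseteq> sharp_dual Q (dual_fam Q F)"
  proof
    fix A assume A: "A \<in> sharp_dual Q F"
    show "A \<in> sharp_dual Q (dual_fam Q F)" unfolding sharp_dual_def
    proof (intro CollectI conjI ballI)
      show "A \<subseteq> Q" using A unfolding sharp_dual_def by auto
      fix C assume C: "C \<in> dual_fam Q F"
      show "A \<inter> C \<in> dual_fam Q F" unfolding dual_fam_def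
      proof (intro CollectI conjI ballI)
        show "A \<inter> C \<subseteq> Q" using C unfolding dual_fam_def by auto
        fix B assume "B \<in> F"
        then have "A \<inter> B \<in> F" using A unfolding sharp_dual_def by auto
        then have "C \<inter> (A \<inter> B) \<noteq> {}" using C unfolding dual_fam_def by auto
        then show "A \<inter> C \<inter> B \<noteq> {}" by blast
      qed
    qed
  qed
  show "sharp_dual Q (dual_fam Q F) \<subseteq> sharp_dual Q F"
  proof
    fix A assume A: "A \<in> sharp_dual Q (dual_fam Q F)"
    show "A \<in> sharp_dual Q F" unfolding sharp_dual_def
    proof (intro CollectI conjI ballI)
      show AQ: "A \<subseteq> Q" using A unfolding sharp_dual_def by auto
      fix B assume B: "B \<in> F"
      show "A \<inter> B \<in> F"
      proof (rule ccontr)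
        assume "A \<inter> B \<notin> F"
        then have "Q - (A \<inter> B) \<in> dual_fam Q F" using compl_dual[OF fam] AQ by blast
        then have "A \<inter> (Q - (A \<inter> B)) \<in> dual_fam Q F" using A unfolding sharp_dual_def by auto
        then have "A \<inter> (Q - (A \<inter> B)) \<inter> B \<noteq> {}" using B unfolding dual_fam_def by auto
        then show False by blast
      qed
    qed
  qed
qed

lemma filter_sharp: assumes "is_filter_on Q F" shows "sharp_dual Q F = F"
proof
  show "sharp_dual Q F \<subseteq> F" using sharp_sub assms is_filter_on_def by blast
  show "F \<subseteq> sharp_dual Q F" using assms
    unfolding is_filter_on_def proper_family_def family_on_def sharp_dual_def by blast
qed

lemma filterdual_sharp:
  assumes "proper_family Q F" "is_filterdual_on Q F"
  shows "sharp_dual Q F = dual_fam Q F"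
proof
  show "sharp_dual Q F \<subseteq> dual_fam Q F" using sharp_dual_sub[OF assms(1)] .
  obtain G where G: "is_filter_on Q G" "F = dual_fam Q G"
    using assms(2) unfolding is_filterdual_on_def by blast
  have famG: "family_on Q G" and GI: "\<forall>A\<in>G. \<forall>B\<in>G. A \<inter> B \<in> G"
    using G(1) unfolding is_filter_on_def proper_family_def by auto
  show "dual_fam Q F \<subseteq> sharp_dual Q F"
  proof
    fix A assume A: "A \<in> dual_fam Q F"
    have AQ: "A \<subseteq> Q" using A unfolding dual_fam_def by auto
    have AG: "A \<in> G"
    proof (rule ccontr)
      assume "A \<notin> G"
      then have "Q - A \<in> F" using compl_dual[OF famG AQ] G(2) by simp
      then show False using A unfolding dual_fam_def by auto
    qed
    show "A \<in> sharp_dual Q F" unfolding sharp_dual_def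
    proof (intro CollectI conjI ballI)
      show "A \<subseteq> Q" by (rule AQ)
      fix B assume B: "B \<in> F"
      show "A \<inter> B \<in> F" unfolding G(2) dual_fam_def
      proof (intro CollectI conjI ballI)
        show "A \<inter> B \<subseteq> Q" using AQ by auto
        fix C assume "C \<in> G"
        then have "A \<inter> C \<in> G" using GI AG by auto
        then have "B \<inter> (A \<inter> C) \<noteq> {}" using B G(2) unfolding dual_fam_def by auto
        then show "A \<inter> B \<inter> C \<noteq> {}" by blast
      qed
    qed
  qed
qed

theorem proposition5p1:
  fixes Q :: "'a set" and \<F> :: "'a set set"
  assumes "infinite Q" and "proper_family Q \<F>"
  shows "(is_filter_on Q (sharp_dual Q \<F>)
          \<and> sharp_dual Q \<F> \<subseteq> \<F> \<inter> dual_fam Q \<F>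
          \<and> (full_family Q \<F> \<longrightarrow> full_family Q (sharp_dual Q \<F>)))
       \<and> sharp_dual Q \<F> = sharp_dual Q (dual_fam Q \<F>)
       \<and> (is_filter_on Q \<F> \<longrightarrow> sharp_dual Q \<F> = \<F>)
       \<and> sharp_dual Q (sharp_dual Q \<F>) = sharp_dual Q \<F>
       \<and> (is_filterdual_on Q \<F> \<longrightarrow> sharp_dual Q \<F> = dual_fam Q \<F>)"
proof -
  note p = assms(2)
  have a1: "is_filter_on Q (sharp_dual Q \<F>)" by (rule sharp_filter[OF p])
  have a2: "sharp_dual Q \<F> \<subseteq> \<F> \<inter> dual_fam Q \<F>"
    by (rule Int_greatest[OF sharp_sub[OF p] sharp_dual_sub[OF p]])
  have a3: "full_family Q \<F> \<longrightarrow> full_family Q (sharp_dual Q \<F>)"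
    by (rule impI, erule sharp_full)
  have c: "is_filter_on Q \<F> \<longrightarrow> sharp_dual Q \<F> = \<F>"
    by (rule impI, erule filter_sharp)
  have c2: "sharp_dual Q (sharp_dual Q \<F>) = sharp_dual Q \<F>"
    by (rule filter_sharp[OF a1])
  have d: "is_filterdual_on Q \<F> \<longrightarrow> sharp_dual Q \<F> = dual_fam Q \<F>"
    by (rule impI, erule filterdual_sharp[OF p])
  have b: "sharp_dual Q \<F> = sharp_dual Q (dual_fam Q \<F>)" by (rule sharp_eq_dual[OF p])
  show ?thesis
    apply (intro conjI)
    apply (rule a1) apply (rule a2) apply (rule a3) apply (rule b) apply (rule c) apply (rule c2) apply (rule d)
    done
qed

end
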